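(* Let $A=(a_{n,k})$ be as described in the context. If $A$ satisfies the $MHBVS$ condition, then \[ \left|\sum_{k=0}^n a_{n,k}D_k(t)\right|=O\!\left(t^{-1}\,\overline{A}_{n,n-2\tau}\right), \] and if $A$ satisfies the $MRBVS$ condition, then \[ \left|\sum_{k=0}^n a_{n,k}D_k(t)\right|=O\!\left(t^{-1}A_{n,\tau}\right), \] for all $n=2,3,\dots$ and all $\frac{2\pi}{n}\le t\le\pi$, where $\tau=[\pi/t]$ (integer part), with $O$-constants independent of $n$ and $t$.
   Context: $A=(a_{n,k})$ is an infinite lower triangular real matrix with $a_{n,k}\ge0$ for $0\le k\le n$, $a_{n,k}=0$ for $k>n$, and $\sum_{k=0}^n a_{n,k}=1$ for every $n$. For $0\le m\le n$, $A_{n,m}=\sum_{k=0}^m a_{n,k}$ and $\overline A_{n,m}=\sum_{k=m}^n a_{n,k}$. $D_k(t)=\frac12+\sum_{\nu=1}^k\cos\nu t$ is the Dirichlet kernel. "$A$ satisfies the $MRBVS$ condition" means: there is a constant $K$ such that for all $n$ and all $0\le m<n$, $\sum_{k=m}^{n-1}|a_{n,k}-a_{n,k+1}|\le K\frac{1}{m+1}\sum_{m/2\le k\le m}a_{n,k}$. "$A$ satisfies the $MHBVS$ condition" means: there is a constant $K$ such that for all $n$ and all $0\le m<n$, $\sum_{k=0}^{n-m-1}|a_{n,k}-a_{n,k+1}|\le K\frac1{m+1}\sum_{k=n-m}^{n}a_{n,k}$. *)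

theory Defs
  imports Complex_Main
begin

definition admissible_matrix :: "(nat \<Rightarrow> nat \<Rightarrow> real) \<Rightarrow> bool" where
  "admissible_matrix a \<longleftrightarrow>
     (\<forall>n k. k \<le> n \<longrightarrow> 0 \<le> a n k) \<and>
     (\<forall>n k. n < k \<longrightarrow> a n k = 0) \<and>
     (\<forall>n. (\<Sum>k=0..n. a n k) = 1)"

definition Amat :: "(nat \<Rightarrow> nat \<Rightarrow> real) \<Rightarrow> nat \<Rightarrow> nat \<Rightarrow> real" where
  "Amat a n m = (\<Sum>k=0..m. a n k)"

definition Abar :: "(nat \<Rightarrow> nat \<Rightarrow> real) \<Rightarrow> nat \<Rightarrow> nat \<Rightarrow> real" where
  "Abar a n m = (\<Sum>k=m..n. a n k)"

definition dirichlet :: "nat \<Rightarrow> real \<Rightarrow> real" where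
  "dirichlet k t = 1/2 + (\<Sum>\<nu>=1..k. cos (real \<nu> * t))"

definition MRBVS :: "(nat \<Rightarrow> nat \<Rightarrow> real) \<Rightarrow> bool" where
  "MRBVS a \<longleftrightarrow> (\<exists>K. \<forall>n m. m < n \<longrightarrow>
     (\<Sum>k=m..n-1. \<bar>a n k - a n (k+1)\<bar>)
       \<le> K * (1 / real (m+1)) * (\<Sum>k\<in>{k. real m / 2 \<le> real k \<and> k \<le> m}. a n k))"

definition MHBVS :: "(nat \<Rightarrow> nat \<Rightarrow> real) \<Rightarrow> bool" where
  "MHBVS a \<longleftrightarrow> (\<exists>K. \<forall>n m. m < n \<longrightarrow>
     (\<Sum>k=0..n-m-1. \<bar>a n k - a n (k+1)\<bar>)
       \<le> K * (1 / real (m+1)) * (\<Sum>k=n-m..n. a n k))"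

end

theory Submission
  imports Defs
begin


lemma dirichlet_Suc: "dirichlet (Suc k) t = dirichlet k t + cos (real (Suc k) * t)"
  by (simp add: dirichlet_def)

lemma dir_sin: "2 * sin (t/2) * dirichlet k t = sin ((real k + 1/2) * t)"
proof (induction k)
  case 0
  then show ?case by (simp add: dirichlet_def)
next
  case (Suc k)
  have e: "2 * sin (t/2) * cos (real (Suc k) * t) = sin ((real (Suc k) + 1/2) * t) - sin ((real k + 1/2) * t)"
  proof -
    have a: "(real (Suc k) + 1/2) * t = real (Suc k) * t + t/2" by (simp add: algebra_simps)
    have b: "(real k + 1/2) * t = real (Suc k) * t - t/2" by (simp add: algebra_simps)
    show ?thesis unfolding a b sin_add sin_diff by (simp add: algebra_simps)
  qed
  show ?case using Suc e by (simp add: dirichlet_Suc algebra_simps)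
qed

definition T :: "real \<Rightarrow> nat \<Rightarrow> real" where "T t k = (\<Sum>j<k. dirichlet j t)"

lemma T_cos: "4 * sin (t/2)^2 * T t k = 1 - cos (real k * t)"
proof (induction k)
  case 0
  then show ?case by (simp add: T_def)
next
  case (Suc k)
  have e: "2 * sin (t/2) * sin ((real k + 1/2) * t) = cos (real k * t) - cos (real (Suc k) * t)"
  proof -
    have a: "real k * t = (real k + 1/2) * t - t/2" by (simp add: algebra_simps)
    have b: "real (Suc k) * t = (real k + 1/2) * t + t/2" by (simp add: algebra_simps)
    show ?thesis unfolding a b cos_add cos_diff by (simp add: algebra_simps)
  qed
  have "4 * sin (t/2)^2 * T t (Suc k) = 4 * sin (t/2)^2 * T t k + 2 * sin (t/2) * (2 * sin (t/2) * dirichlet k t)"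
    by (simp add: T_def algebra_simps power2_eq_square)
  then show ?case using Suc e dir_sin[of t k] by simp
qed

lemma sin_lower: fixes x :: real assumes "0 \<le> x" "x \<le> 2" shows "x / 3 \<le> sin x"
proof -
  have "\<bar>sin x - (\<Sum>m<3. sin_coeff m * x ^ m)\<bar> \<le> inverse (fact 3) * \<bar>x\<bar> ^ 3"
    by (rule Maclaurin_sin_bound)
  moreover have "(\<Sum>m<3. sin_coeff m * x ^ m) = x"
    by (simp add: numeral_3_eq_3 sin_coeff_def)
  moreover have "inverse (fact 3) * \<bar>x\<bar> ^ 3 = x^3 / 6"
  proof -
    have F: "(fact 3::real) = 6"
    proof -
      have "(fact 3::real) = fact (Suc (Suc (Suc 0)))" by (simp only: numeral_3_eq_3)
      also have "\<dots> = 6" by (simp only: fact_Suc fact_0)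
      finally show ?thesis .
    qed
    have "\<bar>x\<bar> = x" using assms(1) by (rule abs_of_nonneg)
    hence "inverse (fact 3) * \<bar>x\<bar> ^ 3 = inverse 6 * x^3" by (simp only: F)
    also have "\<dots> = x^3 / 6" by (rule divide_inverse_commute[symmetric])
    finally show ?thesis .
  qed
  ultimately have "\<bar>sin x - x\<bar> \<le> x^3 / 6" by simp
  moreover have "x^3/6 \<le> 2/3 * x"
  proof -
    have "x^2 \<le> 2^2" using assms by (intro power_mono) auto
    hence "x * x^2 \<le> x * 4" using assms by (intro mult_left_mono) auto
    thus ?thesis by (simp add: power3_eq_cube power2_eq_square)
  qed
  ultimately show ?thesis by linarith
qed

lemma bounds:
  assumes "0 < t" "t \<le> pi"
  shows "\<bar>dirichlet k t\<bar> \<le> 3 / t" "\<bar>T t k\<bar> \<le> 18 / t^2"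
proof -
  let ?s = "sin (t/2)"
  have s: "t/6 \<le> ?s" using sin_lower[of "t/2"] assms pi_less_4 by simp
  have sp: "0 < ?s" using s assms by linarith
  have "\<bar>2 * ?s * dirichlet k t\<bar> \<le> 1" unfolding dir_sin by simp
  hence "2 * ?s * \<bar>dirichlet k t\<bar> \<le> 1" using sp by (simp add: abs_mult)
  hence "2 * (t/6) * \<bar>dirichlet k t\<bar> \<le> 1"
    by (smt (verit) mult_right_mono abs_ge_zero s)
  thus "\<bar>dirichlet k t\<bar> \<le> 3 / t" using assms by (simp add: field_simps)
  have "\<bar>4 * ?s^2 * T t k\<bar> \<le> 2" unfolding T_cos using abs_cos_le_one[of "real k * t"] by linarith
  hence "4 * ?s^2 * \<bar>T t k\<bar> \<le> 2" by (simp add: abs_mult)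
  moreover have "(t/6)^2 \<le> ?s^2" using s assms by (intro power_mono) auto
  ultimately have "4 * (t/6)^2 * \<bar>T t k\<bar> \<le> 2"
    by (smt (verit) mult_right_mono abs_ge_zero)
  thus "\<bar>T t k\<bar> \<le> 18 / t^2" using assms by (simp add: field_simps power2_eq_square)
qed

lemma abel_id:
  fixes a T :: "nat \<Rightarrow> real"
  assumes "p \<le> q"
  shows "(\<Sum>k=p..q. a k * (T (Suc k) - T k)) = a q * T (Suc q) - a p * T p - (\<Sum>k=p..<q. (a (Suc k) - a k) * T (Suc k))"
  using assms
proof (induction q rule: dec_induct)
  case base
  then show ?case by (simp add: algebra_simps)
next
  case (step q)
  then show ?case by (simp add: algebra_simps)
qed

lemma var_bound:
  fixes a :: "nat \<Rightarrow> real"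
  assumes "p \<le> q"
  shows "\<bar>a q - a p\<bar> \<le> (\<Sum>k=p..<q. \<bar>a k - a (Suc k)\<bar>)"
  using assms
proof (induction q rule: dec_induct)
  case base
  then show ?case by simp
next
  case (step q)
  then show ?case by simp
qed

lemma abel_bound:
  fixes a T :: "nat \<Rightarrow> real"
  assumes "p \<le> q" "\<And>k. \<bar>T k\<bar> \<le> M"
  shows "\<bar>\<Sum>k=p..q. a k * (T (Suc k) - T k)\<bar> \<le> M * \<bar>a q\<bar> + \<bar>a p * T p\<bar> + M * (\<Sum>k=p..<q. \<bar>a k - a (Suc k)\<bar>)"
proof -
  have "\<bar>\<Sum>k=p..<q. (a (Suc k) - a k) * T (Suc k)\<bar> \<le> (\<Sum>k=p..<q. \<bar>(a (Suc k) - a k) * T (Suc k)\<bar>)"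
    by (rule sum_abs)
  also have "\<dots> \<le> (\<Sum>k=p..<q. M * \<bar>a k - a (Suc k)\<bar>)"
  proof (rule sum_mono)
    fix k
    have "\<bar>(a (Suc k) - a k) * T (Suc k)\<bar> = \<bar>a k - a (Suc k)\<bar> * \<bar>T (Suc k)\<bar>" by (simp add: abs_mult abs_minus_commute)
    also have "\<dots> \<le> \<bar>a k - a (Suc k)\<bar> * M" by (intro mult_left_mono assms(2)) auto
    finally show "\<bar>(a (Suc k) - a k) * T (Suc k)\<bar> \<le> M * \<bar>a k - a (Suc k)\<bar>" by (simp add: mult.commute)
  qed
  also have "\<dots> = M * (\<Sum>k=p..<q. \<bar>a k - a (Suc k)\<bar>)" by (simp add: sum_distrib_left)
  finally have 1: "\<bar>\<Sum>k=p..<q. (a (Suc k) - a k) * T (Suc k)\<bar> \<le> M * (\<Sum>k=p..<q. \<bar>a k - a (Suc k)\<bar>)" .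
  have 2: "\<bar>a q * T (Suc q)\<bar> \<le> M * \<bar>a q\<bar>"
    using mult_left_mono[OF assms(2)[of "Suc q"], of "\<bar>a q\<bar>"] by (simp add: abs_mult mult.commute)
  show ?thesis unfolding abel_id[OF assms(1)] using 1 2 by linarith
qed

lemma tau:
  assumes "2 \<le> n" "2*pi/real n \<le> t" "t \<le> pi"
  shows "0 < t" "1 \<le> nat \<lfloor>pi/t\<rfloor>" "2 * nat \<lfloor>pi/t\<rfloor> \<le> n" "1 / real (nat \<lfloor>pi/t\<rfloor> + 1) \<le> t"
proof -
  have "0 < 2*pi/real n" using assms by simp
  thus t0: "0 < t" using assms by linarith
  have "1 \<le> pi/t" using t0 assms by (simp add: field_simps)
  hence f1: "1 \<le> \<lfloor>pi/t\<rfloor>" by (simp add: one_le_floor)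
  thus "1 \<le> nat \<lfloor>pi/t\<rfloor>" by linarith
  have "pi/t \<le> real n / 2" using t0 assms by (simp add: field_simps)
  hence "real_of_int \<lfloor>pi/t\<rfloor> \<le> real n / 2" by linarith
  hence "2 * real_of_int \<lfloor>pi/t\<rfloor> \<le> real n" by linarith
  thus "2 * nat \<lfloor>pi/t\<rfloor> \<le> n" using f1 by linarith
  have "pi/t < real (nat \<lfloor>pi/t\<rfloor>) + 1" using f1 by linarith
  hence "pi < (real (nat \<lfloor>pi/t\<rfloor>) + 1) * t" using t0 by (simp add: field_simps)
  hence "1 < (real (nat \<lfloor>pi/t\<rfloor>) + 1) * t" using pi_ge_two by linarith
  thus "1 / real (nat \<lfloor>pi/t\<rfloor> + 1) \<le> t" by (simp add: field_simps)
qed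

lemma adm_nn: "admissible_matrix a \<Longrightarrow> 0 \<le> a n k"
  unfolding admissible_matrix_def by (metis le_less_linear order_refl)

lemma DT: "dirichlet k t = T t (Suc k) - T t k" by (simp add: T_def)

lemma dir_sum_bound:
  assumes "admissible_matrix a" "0 < t" "t \<le> pi"
  shows "\<bar>\<Sum>k\<in>S. a n k * dirichlet k t\<bar> \<le> 3 / t * (\<Sum>k\<in>S. a n k)"
proof -
  have "\<bar>\<Sum>k\<in>S. a n k * dirichlet k t\<bar> \<le> (\<Sum>k\<in>S. \<bar>a n k * dirichlet k t\<bar>)" by (rule sum_abs)
  also have "\<dots> \<le> (\<Sum>k\<in>S. 3 / t * a n k)"
  proof (rule sum_mono)
    fix k
    have "\<bar>a n k * dirichlet k t\<bar> = a n k * \<bar>dirichlet k t\<bar>" using adm_nn[OF assms(1)] by (simp add: abs_mult)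
    also have "\<dots> \<le> a n k * (3/t)" using adm_nn[OF assms(1)] bounds(1)[OF assms(2,3)] by (intro mult_left_mono) auto
    finally show "\<bar>a n k * dirichlet k t\<bar> \<le> 3 / t * a n k" by (simp add: mult.commute)
  qed
  also have "\<dots> = 3 / t * (\<Sum>k\<in>S. a n k)" by (simp add: sum_distrib_left)
  finally show ?thesis .
qed

lemma part_H:
  assumes adm: "admissible_matrix a" and H: "MHBVS a"
  shows "\<exists>C. \<forall>n t. 2 \<le> n \<and> 2 * pi / real n \<le> t \<and> t \<le> pi \<longrightarrow>
            \<bar>\<Sum>k=0..n. a n k * dirichlet k t\<bar>
              \<le> C * (1 / t) * Abar a n (n - 2 * nat \<lfloor>pi / t\<rfloor>)"
proof -
  have nn: "\<And>n k. 0 \<le> a n k" using adm_nn[OF adm] .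
  obtain K0 where K0: "\<forall>n m. m<n \<longrightarrow> (\<Sum>k=0..n-m-1. \<bar>a n k - a n (k+1)\<bar>) \<le> K0 * (1/real(m+1)) * (\<Sum>k=n-m..n. a n k)"
    using H unfolding MHBVS_def by blast
  define K where "K = max K0 0"
  have K0le: "K0 \<le> K" "0 \<le> K" by (auto simp: K_def)
  have K: "(\<Sum>k=0..n-m-1. \<bar>a n k - a n (k+1)\<bar>) \<le> K * (1/real(m+1)) * (\<Sum>k=n-m..n. a n k)" if "m < n" for n m
  proof -
    have "0 \<le> (1/real(m+1)) * (\<Sum>k=n-m..n. a n k)" using nn by (simp add: sum_nonneg)
    hence "K0 * ((1/real(m+1)) * (\<Sum>k=n-m..n. a n k)) \<le> K * ((1/real(m+1)) * (\<Sum>k=n-m..n. a n k))"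
      using K0le by (intro mult_right_mono) auto
    moreover have "(\<Sum>k=0..n-m-1. \<bar>a n k - a n (k+1)\<bar>) \<le> K0 * (1/real(m+1)) * (\<Sum>k=n-m..n. a n k)"
      using K0 that by blast
    ultimately show ?thesis by (simp only: mult.assoc)
  qed
  show ?thesis
  proof (intro exI[of _ "3 + 18*(2+K)"] allI impI)
    fix n t assume a: "2 \<le> n \<and> 2 * pi / real n \<le> t \<and> t \<le> pi"
    define m where "m = nat \<lfloor>pi/t\<rfloor>"
    have t0: "0 < t" and m1: "1 \<le> m" and m2: "2*m \<le> n" and mu: "1/real(m+1) \<le> t"
      using tau[of n t] a unfolding m_def by auto
    have tpi: "t \<le> pi" using a by simp
    define Ab where "Ab = Abar a n (n - 2*m)"
    have Ab0: "0 \<le> Ab" by (simp add: Ab_def Abar_def sum_nonneg nn)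
    define J where "J = {n-2*m..<n-m}"
    have fJ: "finite J" and neJ: "J \<noteq> {}" using m1 m2 by (auto simp: J_def)
    have "Min (a n ` J) \<in> a n ` J" using fJ neJ by simp
    then obtain q0 where q0: "q0 \<in> J" "a n q0 = Min (a n ` J)" by auto
    have "\<exists>q\<in>J. \<forall>k\<in>J. a n q \<le> a n k" using q0 fJ by (intro bexI[of _ q0]) auto
    then obtain q where qJ: "q \<in> J" and qmin: "\<forall>k\<in>J. a n q \<le> a n k" by blast
    have cardJ: "card J = m" using m2 by (simp add: J_def)
    have "real m * a n q \<le> (\<Sum>k\<in>J. a n k)"
      using sum_bounded_below[of J "a n q" "a n"] qmin cardJ by simp
    also have "\<dots> \<le> Ab" unfolding Ab_def Abar_def J_def
      by (rule sum_mono2) (auto simp: nn)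
    finally have maq: "real m * a n q \<le> Ab" .
    define u where "u = 1 / real (m+1)"
    have u0: "0 \<le> u" by (simp add: u_def)
    have aq: "a n q \<le> 2 * u * Ab"
    proof -
      have "real (m+1) * a n q \<le> 2 * real m * a n q" using m1 nn[of n q] by (intro mult_right_mono) auto
      hence "real (m+1) * a n q \<le> 2 * Ab" using maq by linarith
      thus ?thesis unfolding u_def by (simp add: field_simps)
    qed
    have q1: "q \<le> n - m - 1" "n - 2*m \<le> q" "q \<le> n" using qJ by (auto simp: J_def)
    have split: "{0..n} = {0..q} \<union> {Suc q..n}" using q1 by auto
    have S: "(\<Sum>k=0..n. a n k * dirichlet k t) = (\<Sum>k=0..q. a n k * dirichlet k t) + (\<Sum>k=Suc q..n. a n k * dirichlet k t)"
      unfolding split by (rule sum.union_disjoint) auto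
    define V where "V = (\<Sum>k=0..<q. \<bar>a n k - a n (Suc k)\<bar>)"
    have "V \<le> (\<Sum>k=0..n-m-1. \<bar>a n k - a n (k+1)\<bar>)" unfolding V_def Suc_eq_plus1
      using q1 by (intro sum_mono2) auto
    also have "\<dots> \<le> K * u * (\<Sum>k=n-m..n. a n k)" unfolding u_def using K[of m n] m1 m2 by simp
    also have "\<dots> \<le> K * u * Ab"
    proof -
      have "(\<Sum>k=n-m..n. a n k) \<le> Ab" unfolding Ab_def Abar_def by (rule sum_mono2) (auto simp: nn)
      thus ?thesis using K0le u0 by (intro mult_left_mono) auto
    qed
    finally have V: "V \<le> K * u * Ab" .
    have head: "\<bar>\<Sum>k=0..q. a n k * dirichlet k t\<bar> \<le> 18 / t^2 * \<bar>a n q\<bar> + \<bar>a n 0 * T t 0\<bar> + 18 / t^2 * V"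
      unfolding DT V_def by (rule abel_bound) (use bounds(2)[OF t0 tpi] in auto)
    have T0: "T t 0 = 0" by (simp add: T_def)
    have "18 / t^2 * \<bar>a n q\<bar> + 18 / t^2 * V \<le> 18 / t^2 * ((2 + K) * u * Ab)"
    proof -
      have "\<bar>a n q\<bar> + V \<le> (2 + K) * u * Ab" using aq V nn[of n q] by (simp add: algebra_simps)
      hence "18 / t^2 * (\<bar>a n q\<bar> + V) \<le> 18 / t^2 * ((2 + K) * u * Ab)" by (intro mult_left_mono) auto
      thus ?thesis by (simp add: distrib_left)
    qed
    also have "\<dots> \<le> 18 / t^2 * ((2 + K) * t * Ab)"
      using mu u0 K0le Ab0 t0 unfolding u_def[symmetric]
      by (intro mult_left_mono mult_right_mono) auto
    also have "\<dots> = 18 * (2 + K) * (1/t) * Ab" using t0 by (simp add: power2_eq_square field_simps)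
    finally have h2: "\<bar>\<Sum>k=0..q. a n k * dirichlet k t\<bar> \<le> 18 * (2 + K) * (1/t) * Ab" using head T0 by simp
    have "\<bar>\<Sum>k=Suc q..n. a n k * dirichlet k t\<bar> \<le> 3 / t * (\<Sum>k=Suc q..n. a n k)"
      by (rule dir_sum_bound[OF adm t0 tpi])
    also have "\<dots> \<le> 3 / t * Ab"
    proof -
      have "(\<Sum>k=Suc q..n. a n k) \<le> Ab" unfolding Ab_def Abar_def using q1 by (intro sum_mono2) (auto simp: nn)
      thus ?thesis using t0 by (intro mult_left_mono) auto
    qed
    finally have tl: "\<bar>\<Sum>k=Suc q..n. a n k * dirichlet k t\<bar> \<le> 3 * (1/t) * Ab" by simp
    have "\<bar>\<Sum>k=0..n. a n k * dirichlet k t\<bar> \<le> 18 * (2 + K) * (1/t) * Ab + 3 * (1/t) * Ab"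
      unfolding S using h2 tl by linarith
    also have "\<dots> = (3 + 18*(2+K)) * (1/t) * Ab" by (simp add: algebra_simps)
    finally show "\<bar>\<Sum>k=0..n. a n k * dirichlet k t\<bar> \<le> (3 + 18*(2+K)) * (1 / t) * Abar a n (n - 2 * nat \<lfloor>pi / t\<rfloor>)"
      unfolding Ab_def m_def .
  qed
qed

lemma part_R:
  assumes adm: "admissible_matrix a" and R: "MRBVS a"
  shows "\<exists>C. \<forall>n t. 2 \<le> n \<and> 2 * pi / real n \<le> t \<and> t \<le> pi \<longrightarrow>
            \<bar>\<Sum>k=0..n. a n k * dirichlet k t\<bar>
              \<le> C * (1 / t) * Amat a n (nat \<lfloor>pi / t\<rfloor>)"
proof -
  have nn: "\<And>n k. 0 \<le> a n k" using adm_nn[OF adm] .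
  obtain K0 where K0: "\<forall>n m. m<n \<longrightarrow> (\<Sum>k=m..n-1. \<bar>a n k - a n (k+1)\<bar>) \<le> K0 * (1/real(m+1)) * (\<Sum>k\<in>{k. real m / 2 \<le> real k \<and> k \<le> m}. a n k)"
    using R unfolding MRBVS_def by blast
  define K where "K = max K0 0"
  have K0le: "K0 \<le> K" "0 \<le> K" by (auto simp: K_def)
  have K: "(\<Sum>k=m..n-1. \<bar>a n k - a n (k+1)\<bar>) \<le> K * (1/real(m+1)) * (\<Sum>k\<in>{k. real m / 2 \<le> real k \<and> k \<le> m}. a n k)" if "m < n" for n m
  proof -
    have "0 \<le> (1/real(m+1)) * (\<Sum>k\<in>{k. real m / 2 \<le> real k \<and> k \<le> m}. a n k)" using nn by (simp add: sum_nonneg)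
    hence "K0 * ((1/real(m+1)) * (\<Sum>k\<in>{k. real m / 2 \<le> real k \<and> k \<le> m}. a n k)) \<le> K * ((1/real(m+1)) * (\<Sum>k\<in>{k. real m / 2 \<le> real k \<and> k \<le> m}. a n k))"
      using K0le by (intro mult_right_mono) auto
    moreover have "(\<Sum>k=m..n-1. \<bar>a n k - a n (k+1)\<bar>) \<le> K0 * (1/real(m+1)) * (\<Sum>k\<in>{k. real m / 2 \<le> real k \<and> k \<le> m}. a n k)"
      using K0 that by blast
    ultimately show ?thesis by (simp only: mult.assoc)
  qed
  show ?thesis
  proof (intro exI[of _ "3 + 72*(1+K)"] allI impI)
    fix n t assume a: "2 \<le> n \<and> 2 * pi / real n \<le> t \<and> t \<le> pi"
    define m where "m = nat \<lfloor>pi/t\<rfloor>"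
    have t0: "0 < t" and m1: "1 \<le> m" and m2: "2*m \<le> n" and mu: "1/real(m+1) \<le> t"
      using tau[of n t] a unfolding m_def by auto
    have tpi: "t \<le> pi" using a by simp
    define A where "A = Amat a n m"
    have A0: "0 \<le> A" by (simp add: A_def Amat_def sum_nonneg nn)
    define J where "J = {m - m div 2..m}"
    have fJ: "finite J" and neJ: "J \<noteq> {}" by (auto simp: J_def)
    have "Min (a n ` J) \<in> a n ` J" using fJ neJ by simp
    then obtain q0 where q0: "q0 \<in> J" "a n q0 = Min (a n ` J)" by auto
    have "\<exists>q\<in>J. \<forall>k\<in>J. a n q \<le> a n k" using q0 fJ by (intro bexI[of _ q0]) auto
    then obtain p where pJ: "p \<in> J" and pmin: "\<forall>k\<in>J. a n p \<le> a n k" by blast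
    have cardJ: "card J = m div 2 + 1" by (simp add: J_def)
    have "real (m div 2 + 1) * a n p \<le> (\<Sum>k\<in>J. a n k)"
      using sum_bounded_below[of J "a n p" "a n"] pmin cardJ by simp
    also have "\<dots> \<le> A" unfolding A_def Amat_def J_def
      by (rule sum_mono2) (auto simp: nn)
    finally have map: "real (m div 2 + 1) * a n p \<le> A" .
    define u where "u = 1 / real (m+1)"
    have u0: "0 \<le> u" by (simp add: u_def)
    have "m+1 \<le> 2 * (m div 2 + 1)" by presburger
    hence c2: "real (m+1) \<le> 2 * real (m div 2 + 1)" by (metis of_nat_mono of_nat_mult of_nat_numeral)
    have ap: "a n p \<le> 2 * u * A"
    proof -
      have "real (m+1) * a n p \<le> 2 * real (m div 2 + 1) * a n p" using c2 nn[of n p] by (intro mult_right_mono) auto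
      hence "real (m+1) * a n p \<le> 2 * A" using map by linarith
      thus ?thesis unfolding u_def by (simp add: field_simps)
    qed
    have p1: "1 \<le> p" "p \<le> m" "m \<le> 2 * p" "p < n" using pJ m1 m2 by (auto simp: J_def)
    have split: "{0..n} = {0..<p} \<union> {p..n}" using p1 by auto
    have S: "(\<Sum>k=0..n. a n k * dirichlet k t) = (\<Sum>k\<in>{0..<p}. a n k * dirichlet k t) + (\<Sum>k=p..n. a n k * dirichlet k t)"
      unfolding split by (rule sum.union_disjoint) auto
    define V where "V = (\<Sum>k=p..<n. \<bar>a n k - a n (Suc k)\<bar>)"
    have "V = (\<Sum>k=p..n-1. \<bar>a n k - a n (k+1)\<bar>)" unfolding V_def
      using p1 by (intro sum.cong) auto
    also have "\<dots> \<le> K * (1/real(p+1)) * (\<Sum>k\<in>{k. real p / 2 \<le> real k \<and> k \<le> p}. a n k)"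
      using K[of p n] p1 by simp
    also have "\<dots> \<le> K * (2*u) * A"
    proof -
      have "(\<Sum>k\<in>{k. real p / 2 \<le> real k \<and> k \<le> p}. a n k) \<le> A" unfolding A_def Amat_def
        using p1 by (intro sum_mono2) (auto simp: nn)
      moreover have "1/real(p+1) \<le> 2*u" unfolding u_def using p1 by (simp add: field_simps)
      moreover have "0 \<le> (\<Sum>k\<in>{k. real p / 2 \<le> real k \<and> k \<le> p}. a n k)" by (simp add: sum_nonneg nn)
      ultimately show ?thesis using K0le u0 A0
        by (intro mult_left_mono mult_mono) auto
    qed
    finally have V: "V \<le> 2 * K * u * A" by simp
    have V0: "0 \<le> V" unfolding V_def by (simp add: sum_nonneg)
    have an: "a n n \<le> a n p + V" using var_bound[of p n "a n"] p1 unfolding V_def by simp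
    have tail: "\<bar>\<Sum>k=p..n. a n k * dirichlet k t\<bar> \<le> 18 / t^2 * \<bar>a n n\<bar> + \<bar>a n p * T t p\<bar> + 18 / t^2 * V"
      unfolding DT V_def by (rule abel_bound) (use bounds(2)[OF t0 tpi] p1 in auto)
    have Tp: "\<bar>a n p * T t p\<bar> \<le> 18 / t^2 * a n p"
      using mult_left_mono[OF bounds(2)[OF t0 tpi, of p] nn[of n p]] by (simp add: abs_mult nn mult.commute)
    have "18 / t^2 * \<bar>a n n\<bar> + \<bar>a n p * T t p\<bar> + 18 / t^2 * V \<le> 18 / t^2 * (2 * a n p + 2 * V)"
    proof -
      have "18/t^2 * \<bar>a n n\<bar> \<le> 18/t^2 * (a n p + V)" using an nn[of n n] by (intro mult_left_mono) auto
      moreover have "18/t^2 * (2 * a n p + 2 * V) = 18/t^2 * (a n p + V) + 18/t^2 * a n p + 18/t^2 * V"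
        by (simp add: distrib_left)
      ultimately show ?thesis using Tp by linarith
    qed
    also have "\<dots> \<le> 18 / t^2 * (4 * (1 + K) * u * A)"
    proof -
      have "2 * a n p + 2 * V \<le> 4 * (1 + K) * u * A" using ap V by (simp add: algebra_simps)
      thus ?thesis by (intro mult_left_mono) auto
    qed
    also have "\<dots> \<le> 18 / t^2 * (4 * (1 + K) * t * A)"
      using mu u0 K0le A0 t0 unfolding u_def[symmetric]
      by (intro mult_left_mono mult_right_mono) auto
    also have "\<dots> = 72 * (1 + K) * (1/t) * A" using t0 by (simp add: power2_eq_square field_simps)
    finally have t2: "\<bar>\<Sum>k=p..n. a n k * dirichlet k t\<bar> \<le> 72 * (1 + K) * (1/t) * A" using tail by linarith
    have "\<bar>\<Sum>k\<in>{0..<p}. a n k * dirichlet k t\<bar> \<le> 3 / t * (\<Sum>k\<in>{0..<p}. a n k)"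
      by (rule dir_sum_bound[OF adm t0 tpi])
    also have "\<dots> \<le> 3 / t * A"
    proof -
      have "(\<Sum>k\<in>{0..<p}. a n k) \<le> A" unfolding A_def Amat_def using p1 by (intro sum_mono2) (auto simp: nn)
      thus ?thesis using t0 by (intro mult_left_mono) auto
    qed
    finally have hd: "\<bar>\<Sum>k\<in>{0..<p}. a n k * dirichlet k t\<bar> \<le> 3 * (1/t) * A" by simp
    have "\<bar>\<Sum>k=0..n. a n k * dirichlet k t\<bar> \<le> 72 * (1 + K) * (1/t) * A + 3 * (1/t) * A"
      unfolding S using hd t2 by linarith
    also have "\<dots> = (3 + 72*(1+K)) * (1/t) * A" by (simp add: algebra_simps)
    finally show "\<bar>\<Sum>k=0..n. a n k * dirichlet k t\<bar> \<le> (3 + 72*(1+K)) * (1 / t) * Amat a n (nat \<lfloor>pi / t\<rfloor>)"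
      unfolding A_def m_def .
  qed
qed


theorem lemma2:
  fixes a :: "nat \<Rightarrow> nat \<Rightarrow> real"
  assumes "admissible_matrix a"
  shows "(MHBVS a \<longrightarrow> (\<exists>C. \<forall>n t. 2 \<le> n \<and> 2 * pi / real n \<le> t \<and> t \<le> pi \<longrightarrow>
            \<bar>\<Sum>k=0..n. a n k * dirichlet k t\<bar>
              \<le> C * (1 / t) * Abar a n (n - 2 * nat \<lfloor>pi / t\<rfloor>)))
       \<and> (MRBVS a \<longrightarrow> (\<exists>C. \<forall>n t. 2 \<le> n \<and> 2 * pi / real n \<le> t \<and> t \<le> pi \<longrightarrow>
            \<bar>\<Sum>k=0..n. a n k * dirichlet k t\<bar>
              \<le> C * (1 / t) * Amat a n (nat \<lfloor>pi / t\<rfloor>)))"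
  using part_H[OF assms] part_R[OF assms] by blast

end
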